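(* Let $I\subset\mathbb{R}$ be an open interval and $W\subset I$ a countable subset which is dense in $I$; let $\check I$ be the fractured interval of $I$ at $W$. Then the sets $[a^R,b^L]\cap\check I$ for $a<b$ in $W$ form a basis for the topology of $\check I$, and each of these sets is homeomorphic to the Cantor set.
   Context: The divided interval of $I$ at $W$ is the set $\hat I = \{w^{L}, \hat w, w^{R} : w\in W\}\sqcup (I\smallsetminus W)$, with $\pi\colon\hat I\to I$ sending $w^L,\hat w,w^R$ to $w$ and fixing $I\smallsetminus W$, totally ordered so that $\pi$ is order preserving and $w^L<\hat w<w^R$. For $a,b\in\hat I\cup\{\pm\infty\}$, $(a,b)=\{s: a<s<b\}$; basis intervals are the nonempty $(a,b)$ other than those with $a=w^L$ or $b=w^R$ ($w\in W$), and they generate the topology of $\hat I$. The fractured interval is $\check I = \hat I\smallsetminus\{\hat w: w\in W\}$ with the subspace topology; $[a^R,b^L]=\{s: a^R\le s\le b^L\}$. *)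

theory Defs
  imports "HOL-Analysis.Analysis"
begin

(* Points of the divided interval: (x, t) with x \<in> I, t \<in> {-1,0,1};
   for w \<in> W: w^L = (w,-1), \<hat>w = (w,0), w^R = (w,1); for x \<notin> W only (x,0). *)
type_synonym dpt = "real \<times> int"

definition divided_interval :: "real set \<Rightarrow> real set \<Rightarrow> dpt set" where
  "divided_interval I W =
     {(x, t). x \<in> I \<and> (if x \<in> W then t \<in> {-1, 0, 1} else t = 0)}"

definition wL :: "real \<Rightarrow> dpt" where "wL w = (w, -1)"
definition what :: "real \<Rightarrow> dpt" where "what w = (w, 0)"
definition wR :: "real \<Rightarrow> dpt" where "wR w = (w, 1)"

definition dlt :: "dpt \<Rightarrow> dpt \<Rightarrow> bool" where
  "dlt p q \<longleftrightarrow> fst p < fst q \<or> (fst p = fst q \<and> snd p < snd q)"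

definition dle :: "dpt \<Rightarrow> dpt \<Rightarrow> bool" where
  "dle p q \<longleftrightarrow> p = q \<or> dlt p q"

datatype endpt = NegInf | Fin dpt | PosInf

fun elt :: "endpt \<Rightarrow> dpt \<Rightarrow> bool" where
  "elt NegInf _ = True"
| "elt (Fin a) s = dlt a s"
| "elt PosInf _ = False"

fun glt :: "dpt \<Rightarrow> endpt \<Rightarrow> bool" where
  "glt _ NegInf = False"
| "glt s (Fin b) = dlt s b"
| "glt _ PosInf = True"

definition open_iv :: "real set \<Rightarrow> real set \<Rightarrow> endpt \<Rightarrow> endpt \<Rightarrow> dpt set" where
  "open_iv I W a b = {s \<in> divided_interval I W. elt a s \<and> glt s b}"

definition endpoints :: "real set \<Rightarrow> real set \<Rightarrow> endpt set" where
  "endpoints I W = {NegInf, PosInf} \<union> Fin ` divided_interval I W"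

definition basis_intervals :: "real set \<Rightarrow> real set \<Rightarrow> dpt set set" where
  "basis_intervals I W =
     {open_iv I W a b | a b. a \<in> endpoints I W \<and> b \<in> endpoints I W \<and>
        open_iv I W a b \<noteq> {} \<and>
        (\<forall>w\<in>W. a \<noteq> Fin (wL w)) \<and> (\<forall>w\<in>W. b \<noteq> Fin (wR w))}"

definition divided_topology :: "real set \<Rightarrow> real set \<Rightarrow> dpt topology" where
  "divided_topology I W = topology_generated_by (basis_intervals I W)"

definition fractured_interval :: "real set \<Rightarrow> real set \<Rightarrow> dpt set" where
  "fractured_interval I W = divided_interval I W - what ` W"

definition fractured_topology :: "real set \<Rightarrow> real set \<Rightarrow> dpt topology" where
  "fractured_topology I W = subtopology (divided_topology I W) (fractured_interval I W)"

definition closed_iv :: "dpt \<Rightarrow> dpt \<Rightarrow> dpt set" where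
  "closed_iv p q = {s. dle p s \<and> dle s q}"

primrec cantor_approx :: "nat \<Rightarrow> real set" where
  "cantor_approx 0 = {0..1}"
| "cantor_approx (Suc n) = (\<lambda>x. x / 3) ` cantor_approx n \<union> (\<lambda>x. 2/3 + x / 3) ` cantor_approx n"

definition cantor_set :: "real set" where
  "cantor_set = (\<Inter>n. cantor_approx n)"

end

theory Submission
  imports Defs
begin



definition tern :: "(nat \<Rightarrow> bool) \<Rightarrow> real" where
  "tern d = (\<Sum>n. (if d n then 2 else 0) / 3 ^ Suc n)"

lemma tern_summable: "summable (\<lambda>n. (if d n then 2 else 0) / (3::real) ^ Suc n)"
proof (rule summable_comparison_test[where g="\<lambda>n. 2 * (1/3::real)^ Suc n"])
  show "\<exists>N. \<forall>n\<ge>N. norm ((if d n then 2 else 0) / (3::real) ^ Suc n) \<le> 2 * (1/3)^Suc n"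
    by (auto simp: power_divide)
  show "summable (\<lambda>n. 2 * (1/3::real)^ Suc n)"
    by (intro summable_mult summable_Suc_iff[THEN iffD2] summable_geometric) auto
qed

lemma tern_rec: "tern d = (if d 0 then 2/3 else 0) + tern (\<lambda>n. d (Suc n)) / 3"
proof -
  have "tern (\<lambda>n. d (Suc n)) / 3 = (\<Sum>n. (if d (Suc n) then 2 else 0) / 3 ^ Suc n / 3)"
    unfolding tern_def by (rule suminf_divide[symmetric, OF tern_summable])
  also have "\<dots> = (\<Sum>n. (if d (Suc n) then 2 else 0) / 3 ^ Suc (Suc n))"
    by (simp add: field_simps)
  also have "\<dots> = tern d - (if d 0 then 2/3 else 0)"
    unfolding tern_def using suminf_split_head[OF tern_summable[of d]] by simp
  finally show ?thesis by linarith
qed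

lemma tern_nonneg: "0 \<le> tern d"
  unfolding tern_def by (rule suminf_nonneg[OF tern_summable]) auto

lemma tern_le1: "tern d \<le> 1"
proof -
  have "tern d \<le> tern (\<lambda>_. True)"
    unfolding tern_def by (rule suminf_le[OF _ tern_summable tern_summable]) auto
  moreover have "tern (\<lambda>_. True) = 1"
    using tern_rec[of "\<lambda>_. True"] by simp
  ultimately show ?thesis by simp
qed

lemma tern_True: "d 0 \<Longrightarrow> 2/3 \<le> tern d"
  using tern_rec[of d] tern_nonneg[of "\<lambda>n. d (Suc n)"] by simp

lemma tern_False: "\<not> d 0 \<Longrightarrow> tern d \<le> 1/3"
  using tern_rec[of d] tern_le1[of "\<lambda>n. d (Suc n)"] by simp

lemma tern_close: "(\<forall>k<n. d k = e k) \<Longrightarrow> \<bar>tern d - tern e\<bar> \<le> 1/3^n"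
proof (induction n arbitrary: d e)
  case 0
  then show ?case using tern_nonneg[of d] tern_le1[of d] tern_nonneg[of e] tern_le1[of e] by simp
next
  case (Suc n)
  have "\<bar>tern (\<lambda>n. d (Suc n)) - tern (\<lambda>n. e (Suc n))\<bar> \<le> 1/3^n"
    using Suc by (intro Suc.IH) auto
  moreover have "d 0 = e 0" using Suc by auto
  ultimately show ?case using tern_rec[of d] tern_rec[of e] by (auto simp: abs_if split: if_splits)
qed

lemma tern_far: "\<bar>tern d - tern e\<bar> < 1/3^n \<Longrightarrow> (\<forall>k<n. d k = e k)"
proof (induction n arbitrary: d e)
  case 0
  then show ?case by simp
next
  case (Suc n)
  have d0: "d 0 = e 0"
  proof (rule ccontr)
    assume "d 0 \<noteq> e 0"
    then have "1/3 \<le> \<bar>tern d - tern e\<bar>"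
      using tern_True[of d] tern_False[of d] tern_True[of e] tern_False[of e] by (cases "d 0") auto
    moreover have "(1::real)/3^Suc n \<le> 1/3" by (simp add: field_simps)
    ultimately show False using Suc.prems by simp
  qed
  have "\<bar>tern (\<lambda>n. d (Suc n)) - tern (\<lambda>n. e (Suc n))\<bar> < 1/3^n"
    using Suc.prems tern_rec[of d] tern_rec[of e] d0 by (auto simp: abs_if split: if_splits)
  then have "\<forall>k<n. d (Suc k) = e (Suc k)" using Suc.IH by blast
  then show ?case using d0 by (auto simp: less_Suc_eq_0_disj)
qed

lemma tern_inj: "tern d = tern e \<Longrightarrow> d = e"
proof
  fix k assume "tern d = tern e"
  then show "d k = e k" using tern_far[of d e "Suc k"] by simp
qed

lemma cantor_approx_01: "cantor_approx n \<subseteq> {0..1}"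
  by (induction n) auto

lemma cantor_01: "x \<in> cantor_set \<Longrightarrow> 0 \<le> x \<and> x \<le> 1"
proof -
  assume "x \<in> cantor_set"
  then have "x \<in> cantor_approx 0" unfolding cantor_set_def by blast
  then show ?thesis using cantor_approx_01[of 0] by auto
qed

lemma tern_cantor: "tern d \<in> cantor_set"
proof -
  have "\<forall>d. tern d \<in> cantor_approx m" for m
  proof (induction m)
    case 0
    then show ?case using tern_nonneg tern_le1 by auto
  next
    case (Suc m)
    show ?case
    proof
      fix d
      have "tern (\<lambda>n. d (Suc n)) \<in> cantor_approx m" using Suc by blast
      then show "tern d \<in> cantor_approx (Suc m)"
        using tern_rec[of d] by (cases "d 0") (auto intro!: image_eqI)
    qed
  qed
  then show ?thesis unfolding cantor_set_def by auto
qed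

lemma cantor_split:
  assumes "x \<in> cantor_set"
  shows "(x \<le> 1/3 \<and> 3*x \<in> cantor_set) \<or> (2/3 \<le> x \<and> 3*x-2 \<in> cantor_set)"
proof -
  have A: "x \<in> cantor_approx (Suc m)" for m using assms unfolding cantor_set_def by blast
  show ?thesis
  proof (cases "x \<le> 1/3")
    case True
    have "3*x \<in> cantor_approx m" for m
    proof -
      from A[of m] obtain y where "y \<in> cantor_approx m" "x = y/3 \<or> x = 2/3 + y/3" by auto
      moreover have "0 \<le> y" using \<open>y \<in> cantor_approx m\<close> cantor_approx_01[of m] by auto
      ultimately show ?thesis using True by (auto simp: mult.commute)
    qed
    then show ?thesis using True unfolding cantor_set_def by auto
  next
    case False
    have "3*x - 2 \<in> cantor_approx m" for m
    proof -
      from A[of m] obtain y where "y \<in> cantor_approx m" "x = y/3 \<or> x = 2/3 + y/3" by auto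
      moreover have "y \<le> 1" using \<open>y \<in> cantor_approx m\<close> cantor_approx_01[of m] by auto
      ultimately show ?thesis using False by (auto simp: algebra_simps)
    qed
    moreover have "2/3 \<le> x"
    proof -
      have "x \<in> (\<lambda>x. x/3) ` cantor_approx 0 \<union> (\<lambda>x. 2/3 + x/3) ` cantor_approx 0"
        using A[of 0] by (simp only: cantor_approx.simps(2))
      then obtain y where "y \<in> cantor_approx 0" "x = y/3 \<or> x = 2/3 + y/3" by blast
      then show ?thesis using False by auto
    qed
    ultimately show ?thesis unfolding cantor_set_def by auto
  qed
qed

definition nxt :: "real \<Rightarrow> real" where "nxt x = (if x \<le> 1/3 then 3*x else 3*x-2)"
definition dig :: "real \<Rightarrow> nat \<Rightarrow> bool" where "dig x n = (1/3 < (nxt ^^ n) x)"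

lemma dig_Suc: "(\<lambda>n. dig x (Suc n)) = dig (nxt x)"
  unfolding dig_def by (simp add: funpow_Suc_right del: funpow.simps)

lemma nxt_cantor: "x \<in> cantor_set \<Longrightarrow> nxt x \<in> cantor_set"
  using cantor_split[of x] unfolding nxt_def by auto

lemma cantor_tern_approx: "x \<in> cantor_set \<Longrightarrow> \<bar>x - tern (dig x)\<bar> \<le> 1/3^n"
proof (induction n arbitrary: x)
  case 0
  then show ?case using cantor_01[of x] tern_nonneg[of "dig x"] tern_le1[of "dig x"] unfolding abs_le_iff by simp
next
  case (Suc n)
  have IH: "\<bar>nxt x - tern (dig (nxt x))\<bar> \<le> 1/3^n" using Suc nxt_cantor by blast
  have r: "tern (dig x) = (if dig x 0 then 2/3 else 0) + tern (dig (nxt x)) / 3"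
    using tern_rec[of "dig x"] dig_Suc[of x] by simp
  have "x - tern (dig x) = (nxt x - tern (dig (nxt x))) / 3"
    unfolding r by (simp add: dig_def nxt_def field_simps)
  then show ?case using IH by simp
qed

lemma cantor_tern: "x \<in> cantor_set \<Longrightarrow> x = tern (dig x)"
proof (rule ccontr)
  assume x: "x \<in> cantor_set" and ne: "x \<noteq> tern (dig x)"
  then have "0 < \<bar>x - tern (dig x)\<bar>" by simp
  then obtain n where "(1/3::real)^n < \<bar>x - tern (dig x)\<bar>"
    using real_arch_pow_inv[of "\<bar>x - tern (dig x)\<bar>" "1/3"] by auto
  then show False using cantor_tern_approx[OF x, of n] by (simp add: power_divide)
qed




lemma dle_iff: "dle p q \<longleftrightarrow> fst p < fst q \<or> (fst p = fst q \<and> snd p \<le> snd q)"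
  unfolding dle_def dlt_def by (cases p; cases q) auto

lemma dlt_iff: "dlt p q \<longleftrightarrow> fst p < fst q \<or> (fst p = fst q \<and> snd p < snd q)"
  unfolding dlt_def by simp

lemma dle_trans: "dle p q \<Longrightarrow> dle q r \<Longrightarrow> dle p r"
  unfolding dle_iff by auto

lemma elt_trans: "elt c p \<Longrightarrow> dle p u \<Longrightarrow> elt c u"
  by (cases c) (auto simp: dle_iff dlt_iff)

lemma glt_trans: "dle u p \<Longrightarrow> glt p e \<Longrightarrow> glt u e"
  by (cases e) (auto simp: dle_iff dlt_iff)

locale frac =
  fixes I W :: "real set"
  assumes intv: "is_interval I" and opn: "open I" and cntW: "countable W"
    and WI: "W \<subseteq> I" and dense: "I \<subseteq> closure W"
begin

abbreviation "D \<equiv> divided_interval I W"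
abbreviation "F \<equiv> fractured_interval I W"

lemma mem_D: "(x, t) \<in> D \<longleftrightarrow> x \<in> I \<and> (if x \<in> W then t \<in> {-1, 0, 1} else t = 0)"
  unfolding divided_interval_def by simp

lemma mem_F: "(x, t) \<in> F \<longleftrightarrow> x \<in> I \<and> (if x \<in> W then t = -1 \<or> t = 1 else t = 0)"
  unfolding fractured_interval_def divided_interval_def what_def by auto

lemma F_D: "F \<subseteq> D"
  unfolding fractured_interval_def by auto

lemma dens: assumes "x \<in> I" "y < x" shows "\<exists>w\<in>W. y < w \<and> w < x"
proof -
  obtain e where e: "e > 0" "ball x e \<subseteq> I" using opn assms(1) open_contains_ball by blast
  define z where "z = max y (x - e)"
  define m where "m = (z + x) / 2"
  have z: "z < x" "x - e \<le> z" "y \<le> z" using e assms unfolding z_def by auto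
  have "dist m x < e" using z e(1) unfolding m_def dist_real_def by (simp add: abs_less_iff field_simps)
  then have "m \<in> closure W" using e dense by (metis mem_ball dist_commute subsetD)
  then obtain w where w: "w \<in> W" "dist w m < (x - z) / 2"
    using \<open>z < x\<close> unfolding closure_approachable by (meson half_gt_zero diff_gt_0_iff_gt)
  then have "z < w" "w < x" using z unfolding m_def dist_real_def abs_less_iff by (auto simp: field_simps)
  then show ?thesis using w z by (intro bexI[of _ w]) auto
qed

lemma dens': assumes "x \<in> I" "x < y" shows "\<exists>w\<in>W. x < w \<and> w < y"
proof -
  obtain e where e: "e > 0" "ball x e \<subseteq> I" using opn assms(1) open_contains_ball by blast
  define z where "z = min y (x + e)"
  define m where "m = (z + x) / 2"
  have z: "x < z" "z \<le> x + e" "z \<le> y" using e assms unfolding z_def by auto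
  have "dist m x < e" using z e(1) unfolding m_def dist_real_def by (simp add: abs_less_iff field_simps)
  then have "m \<in> closure W" using e dense by (metis mem_ball dist_commute subsetD)
  then obtain w where w: "w \<in> W" "dist w m < (z - x) / 2"
    using \<open>x < z\<close> unfolding closure_approachable by (meson half_gt_zero diff_gt_0_iff_gt)
  then have "x < w" "w < z" using z unfolding m_def dist_real_def abs_less_iff by (auto simp: field_simps)
  then show ?thesis using w z by (intro bexI[of _ w]) auto
qed

definition Bset :: "real \<Rightarrow> real \<Rightarrow> dpt set" where
  "Bset p q = closed_iv (wR p) (wL q) \<inter> F"

lemma mem_Bset: "s \<in> Bset p q \<longleftrightarrow> s \<in> F \<and> dle (wR p) s \<and> dle s (wL q)"
  unfolding Bset_def closed_iv_def by auto

lemma Bset_eq: assumes "p \<in> W" "q \<in> W"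
  shows "Bset p q = F \<inter> open_iv I W (Fin (what p)) (Fin (what q))"
proof -
  have "s \<in> Bset p q \<longleftrightarrow> s \<in> F \<inter> open_iv I W (Fin (what p)) (Fin (what q))" for s
  proof (cases s)
    case (Pair x t)
    show ?thesis using assms F_D unfolding Pair mem_Bset open_iv_def
      by (auto simp: dle_iff dlt_iff wR_def wL_def what_def mem_F)
  qed
  then show ?thesis by blast
qed

lemma Bset_basis: assumes "p \<in> W" "q \<in> W" "p < q"
  shows "open_iv I W (Fin (what p)) (Fin (what q)) \<in> basis_intervals I W"
proof -
  have "wR p \<in> open_iv I W (Fin (what p)) (Fin (what q))"
    using assms WI unfolding open_iv_def wR_def what_def divided_interval_def by (auto simp: dlt_iff)
  moreover have "Fin (what p) \<in> endpoints I W" "Fin (what q) \<in> endpoints I W"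
    using assms WI unfolding endpoints_def what_def divided_interval_def by auto
  moreover have "\<forall>w\<in>W. Fin (what p) \<noteq> Fin (wL w)" "\<forall>w\<in>W. Fin (what q) \<noteq> Fin (wR w)"
    by (auto simp: what_def wL_def wR_def)
  ultimately show ?thesis unfolding basis_intervals_def by blast
qed

lemma Bset_open: assumes "p \<in> W" "q \<in> W" "p < q"
  shows "openin (fractured_topology I W) (Bset p q)"
  unfolding fractured_topology_def openin_subtopology divided_topology_def
  using Bset_basis[OF assms] Bset_eq[OF assms(1,2)]
  by (intro exI[of _ "open_iv I W (Fin (what p)) (Fin (what q))"]) (auto intro: topology_generated_by_Basis)

lemma basis_case:
  assumes "V \<in> basis_intervals I W" "s \<in> F" "s \<in> V"
  shows "\<exists>p q. p \<in> W \<and> q \<in> W \<and> p < q \<and> s \<in> Bset p q \<and> Bset p q \<subseteq> V"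
proof -
  obtain c e where V: "V = open_iv I W c e" "c \<in> endpoints I W" "e \<in> endpoints I W"
    "\<forall>w\<in>W. c \<noteq> Fin (wL w)" "\<forall>w\<in>W. e \<noteq> Fin (wR w)"
    using assms(1) unfolding basis_intervals_def by blast
  obtain x t where s: "s = (x, t)" by (cases s)
  have sF: "x \<in> I" "if x \<in> W then t = -1 \<or> t = 1 else t = 0" using assms(2) unfolding s mem_F by auto
  have ce: "elt c s" "glt s e" using assms(3) unfolding V open_iv_def by auto
  obtain p where p: "p \<in> W" "dle (wR p) s" "elt c (wR p)" "p < x \<or> (p = x \<and> t = 1)"
  proof (cases "t = 1")
    case True
    then have "x \<in> W" using sF by (auto split: if_splits)
    then show ?thesis using that[of x] True ce unfolding s wR_def by (auto simp: dle_iff)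
  next
    case False
    then have t0: "t \<le> 0" using sF by (auto split: if_splits)
    show ?thesis
    proof (cases c)
      case NegInf
      then obtain w where "w \<in> W" "x - 1 < w" "w < x" using dens[OF sF(1), of "x - 1"] by auto
      then show ?thesis using that[of w] NegInf unfolding s wR_def by (auto simp: dle_iff)
    next
      case PosInf
      then show ?thesis using ce by simp
    next
      case (Fin y')
      obtain y t' where y': "y' = (y, t')" by (cases y')
      have yD: "(y, t') \<in> D" using V(2) unfolding Fin y' endpoints_def by auto
      have "y < x"
      proof (rule ccontr)
        assume "\<not> y < x"
        then have "y = x" "t' < t" using ce(1) unfolding Fin y' s by (auto simp: dlt_iff)
        then have "x \<in> W" "t' = -1" using yD t0 unfolding mem_D by (auto split: if_splits)
        then show False using V(4) unfolding Fin y' wL_def \<open>y = x\<close> by auto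
      qed
      then obtain w where "w \<in> W" "y < w" "w < x" using dens[OF sF(1)] by auto
      then show ?thesis using that[of w] Fin y' unfolding s wR_def by (auto simp: dle_iff dlt_iff)
    qed
  qed
  obtain q where q: "q \<in> W" "dle s (wL q)" "glt (wL q) e" "x < q \<or> (q = x \<and> t = -1)"
  proof (cases "t = -1")
    case True
    then have "x \<in> W" using sF by (auto split: if_splits)
    then show ?thesis using that[of x] True ce unfolding s wL_def by (auto simp: dle_iff)
  next
    case False
    then have t0: "t \<ge> 0" using sF by (auto split: if_splits)
    show ?thesis
    proof (cases e)
      case PosInf
      then obtain w where "w \<in> W" "x < w" "w < x + 1" using dens'[OF sF(1), of "x + 1"] by auto
      then show ?thesis using that[of w] PosInf unfolding s wL_def by (auto simp: dle_iff)
    next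
      case NegInf
      then show ?thesis using ce by simp
    next
      case (Fin y')
      obtain y t' where y': "y' = (y, t')" by (cases y')
      have yD: "(y, t') \<in> D" using V(3) unfolding Fin y' endpoints_def by auto
      have "x < y"
      proof (rule ccontr)
        assume "\<not> x < y"
        then have "y = x" "t < t'" using ce(2) unfolding Fin y' s by (auto simp: dlt_iff)
        then have "x \<in> W" "t' = 1" using yD t0 sF unfolding mem_D by (auto split: if_splits)
        then show False using V(5) unfolding Fin y' wR_def \<open>y = x\<close> by auto
      qed
      then obtain w where "w \<in> W" "x < w" "w < y" using dens'[OF sF(1)] by auto
      then show ?thesis using that[of w] Fin y' unfolding s wL_def by (auto simp: dle_iff dlt_iff)
    qed
  qed
  have "p < q" using p(4) q(4) by auto
  moreover have "s \<in> Bset p q" using assms(2) p q unfolding mem_Bset by auto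
  moreover have "Bset p q \<subseteq> V"
  proof
    fix u assume "u \<in> Bset p q"
    then have "u \<in> F" "dle (wR p) u" "dle u (wL q)" unfolding mem_Bset by auto
    then show "u \<in> V" unfolding V(1) open_iv_def using F_D elt_trans[OF p(3)] glt_trans[OF _ q(3)] by auto
  qed
  ultimately show ?thesis using p q by blast
qed

lemma gen_case:
  assumes "generate_topology_on (basis_intervals I W) V"
  shows "\<forall>s\<in>F \<inter> V. \<exists>p q. p \<in> W \<and> q \<in> W \<and> p < q \<and> s \<in> Bset p q \<and> Bset p q \<subseteq> V"
  using assms
proof (induction rule: generate_topology_on.induct)
  case Empty
  then show ?case by simp
next
  case (Int V1 V2)
  show ?case
  proof
    fix s assume s: "s \<in> F \<inter> (V1 \<inter> V2)"
    obtain p1 q1 where 1: "p1 \<in> W" "q1 \<in> W" "p1 < q1" "s \<in> Bset p1 q1" "Bset p1 q1 \<subseteq> V1"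
      using Int.IH(1) s by blast
    obtain p2 q2 where 2: "p2 \<in> W" "q2 \<in> W" "p2 < q2" "s \<in> Bset p2 q2" "Bset p2 q2 \<subseteq> V2"
      using Int.IH(2) s by blast
    have sb: "dle (wR p1) s" "dle s (wL q1)" "dle (wR p2) s" "dle s (wL q2)" "s \<in> F"
      using 1 2 unfolding mem_Bset by auto
    then have lt: "p1 < q2" "p2 < q1" unfolding dle_iff wR_def wL_def by auto
    have "max p1 p2 \<in> W" "min q1 q2 \<in> W" using 1 2 by (auto simp: max_def min_def)
    moreover have "max p1 p2 < min q1 q2" using lt 1 2 by auto
    moreover have "s \<in> Bset (max p1 p2) (min q1 q2)"
      using sb unfolding mem_Bset by (auto simp: max_def min_def)
    moreover have "Bset (max p1 p2) (min q1 q2) \<subseteq> Bset p1 q1 \<inter> Bset p2 q2"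
      by (auto simp: mem_Bset dle_iff wR_def wL_def max_def min_def split: if_splits)
    ultimately show "\<exists>p q. p \<in> W \<and> q \<in> W \<and> p < q \<and> s \<in> Bset p q \<and> Bset p q \<subseteq> V1 \<inter> V2"
      using 1 2 by blast
  qed
next
  case (UN K)
  then show ?case by blast
next
  case (Basis V)
  then show ?case using basis_case by blast
qed

definition "BB = {Bset p q | p q. p \<in> W \<and> q \<in> W \<and> p < q}"

lemma part1: "openin (fractured_topology I W) = arbitrary union_of (\<lambda>U. U \<in> BB)"
proof (intro ext iffI)
  fix U assume "openin (fractured_topology I W) U"
  then obtain V where V: "openin (divided_topology I W) V" "U = V \<inter> F"
    unfolding fractured_topology_def openin_subtopology by blast
  have g: "\<forall>s\<in>F \<inter> V. \<exists>p q. p \<in> W \<and> q \<in> W \<and> p < q \<and> s \<in> Bset p q \<and> Bset p q \<subseteq> V"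
    using V(1) unfolding divided_topology_def openin_topology_generated_by_iff by (rule gen_case)
  have "U = \<Union>{B \<in> BB. B \<subseteq> U}"
  proof
    show "U \<subseteq> \<Union>{B \<in> BB. B \<subseteq> U}"
    proof
      fix s assume "s \<in> U"
      then obtain p q where "p \<in> W" "q \<in> W" "p < q" "s \<in> Bset p q" "Bset p q \<subseteq> V"
        using g V(2) by blast
      moreover have "Bset p q \<subseteq> F" unfolding Bset_def by auto
      ultimately show "s \<in> \<Union>{B \<in> BB. B \<subseteq> U}" unfolding BB_def V(2) by blast
    qed
  qed auto
  then show "(arbitrary union_of (\<lambda>U. U \<in> BB)) U" unfolding union_of_def arbitrary_def
    by (intro exI[of _ "{B \<in> BB. B \<subseteq> U}"]) auto
next
  fix U assume "(arbitrary union_of (\<lambda>U. U \<in> BB)) U"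
  then obtain \<U> where "\<U> \<subseteq> BB" "\<Union>\<U> = U" unfolding union_of_def by auto
  moreover have "openin (fractured_topology I W) B" if "B \<in> BB" for B
    using that Bset_open unfolding BB_def by auto
  ultimately show "openin (fractured_topology I W) U" by auto
qed

end



context frac begin

definition split :: "real \<Rightarrow> real \<Rightarrow> real" where
  "split p q = (SOME w. w \<in> W \<and> p < w \<and> w < q \<and>
      (\<forall>v\<in>W. p < v \<and> v < q \<longrightarrow> to_nat_on W w \<le> to_nat_on W v))"

lemma split: assumes "q \<in> I" "p < q"
  shows "split p q \<in> W" "p < split p q" "split p q < q"
    "\<And>v. v \<in> W \<Longrightarrow> p < v \<Longrightarrow> v < q \<Longrightarrow> to_nat_on W (split p q) \<le> to_nat_on W v"
proof -
  obtain w0 where "w0 \<in> W" "p < w0" "w0 < q" using dens[OF assms] by auto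
  then obtain w where "w \<in> W \<and> p < w \<and> w < q" "\<forall>v. v \<in> W \<and> p < v \<and> v < q \<longrightarrow> to_nat_on W w \<le> to_nat_on W v"
    using ex_has_least_nat[of "\<lambda>w. w \<in> W \<and> p < w \<and> w < q" w0 "to_nat_on W"] by blast
  then have "\<exists>w. w \<in> W \<and> p < w \<and> w < q \<and>
      (\<forall>v\<in>W. p < v \<and> v < q \<longrightarrow> to_nat_on W w \<le> to_nat_on W v)" by blast
  from someI_ex[OF this] show "split p q \<in> W" "p < split p q" "split p q < q"
    "\<And>v. v \<in> W \<Longrightarrow> p < v \<Longrightarrow> v < q \<Longrightarrow> to_nat_on W (split p q) \<le> to_nat_on W v"
    unfolding split_def by auto
qed

lemma between: assumes "s \<in> F" "t \<in> F" "dlt s t"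
  shows "\<exists>w\<in>W. dle s (wL w) \<and> dle (wR w) t"
proof -
  obtain x u y v where st: "s = (x, u)" "t = (y, v)" by (cases s, cases t)
  show ?thesis
  proof (cases "x < y")
    case True
    have "y \<in> I" using assms(2) unfolding st mem_F by auto
    then obtain w where "w \<in> W" "x < w" "w < y" using dens[OF _ True] by auto
    then show ?thesis unfolding st wL_def wR_def dle_iff by auto
  next
    case False
    then have "x = y" "u < v" using assms(3) unfolding st dlt_iff by auto
    then have "x \<in> W" "u = -1" "v = 1" using assms(1,2) unfolding st mem_F by (auto split: if_splits)
    then show ?thesis unfolding st wL_def wR_def dle_iff using \<open>x = y\<close> by auto
  qed
qed

end

locale frac2 = frac +
  fixes a b :: real
  assumes aW: "a \<in> W" and bW: "b \<in> W" and ab: "a < b"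
begin

abbreviation "U \<equiv> Bset a b"

primrec st :: "dpt \<Rightarrow> nat \<Rightarrow> real \<times> real" where
  "st s 0 = (a, b)"
| "st s (Suc n) = (if dle (wR (split (fst (st s n)) (snd (st s n)))) s
     then (split (fst (st s n)) (snd (st s n)), snd (st s n))
     else (fst (st s n), split (fst (st s n)) (snd (st s n))))"

definition sp :: "dpt \<Rightarrow> nat \<Rightarrow> real" where
  "sp s n = split (fst (st s n)) (snd (st s n))"

definition addr :: "dpt \<Rightarrow> nat \<Rightarrow> bool" where
  "addr s n = dle (wR (sp s n)) s"

lemma st_Suc': "st s (Suc n) = (if addr s n then (sp s n, snd (st s n)) else (fst (st s n), sp s n))"
  unfolding addr_def sp_def by simp

lemma st_inv: assumes "s \<in> U"
  shows "fst (st s n) \<in> W \<and> snd (st s n) \<in> W \<and> fst (st s n) < snd (st s n) \<and>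
    dle (wR (fst (st s n))) s \<and> dle s (wL (snd (st s n))) \<and> a \<le> fst (st s n) \<and> snd (st s n) \<le> b"
proof (induction n)
  case 0
  then show ?case using assms aW bW ab unfolding mem_Bset by auto
next
  case (Suc n)
  let ?p = "fst (st s n)" and ?q = "snd (st s n)"
  have "?q \<in> I" using Suc WI by auto
  note sp = split[OF this, of ?p]
  have sF: "s \<in> F" using assms unfolding mem_Bset by auto
  show ?case
  proof (cases "addr s n")
    case True
    then show ?thesis using Suc sp unfolding st_Suc' addr_def sp_def by auto
  next
    case False
    have spW: "sp s n \<in> W" using sp(1) Suc unfolding sp_def by simp
    have "dle s (wL (sp s n))"
    proof -
      obtain x t where s: "s = (x, t)" by (cases s)
      obtain w where w: "w = sp s n" by simp
      have "w \<in> W" "\<not> dle (w, 1) (x, t)" "(x, t) \<in> F"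
        using False sF spW unfolding w s addr_def wR_def by auto
      then have "dle (x, t) (w, -1)" unfolding dle_iff mem_F
        by (cases "x = w") (auto split: if_splits)
      then show ?thesis unfolding w s wL_def .
    qed
    then show ?thesis using Suc sp False unfolding st_Suc' sp_def by auto
  qed
qed

lemma sp_in: "s \<in> U \<Longrightarrow> sp s n \<in> W \<and> fst (st s n) < sp s n \<and> sp s n < snd (st s n)"
  using st_inv[of s n] split[of "snd (st s n)" "fst (st s n)"] WI unfolding sp_def by auto

lemma st_mono1: "s \<in> U \<Longrightarrow> fst (st s n) \<le> fst (st s (Suc n))"
  using sp_in[of s n] unfolding st_Suc' by auto

lemma st_mono2: "s \<in> U \<Longrightarrow> snd (st s (Suc n)) \<le> snd (st s n)"
  using sp_in[of s n] unfolding st_Suc' by auto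

lemma st_monoN: "s \<in> U \<Longrightarrow> n \<le> m \<Longrightarrow> fst (st s n) \<le> fst (st s m) \<and> snd (st s m) \<le> snd (st s n)"
  using lift_Suc_mono_le[of "\<lambda>n. fst (st s n)"] lift_Suc_antimono_le[of "\<lambda>n. snd (st s n)"]
    st_mono1 st_mono2 by blast

lemma sp_inj: assumes "s \<in> U" shows "inj (sp s)"
proof -
  have *: "sp s n \<noteq> sp s m" if "n < m" for n m
  proof -
    have "sp s n = fst (st s (Suc n)) \<or> sp s n = snd (st s (Suc n))" unfolding st_Suc' by auto
    moreover have "fst (st s (Suc n)) \<le> fst (st s m) \<and> snd (st s m) \<le> snd (st s (Suc n))"
      using st_monoN[OF assms Suc_leI[OF that]] by blast
    ultimately show ?thesis using sp_in[OF assms, of m] by auto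
  qed
  show ?thesis unfolding inj_def using * by (metis linorder_neqE_nat)
qed

lemma fin_W: "finite {w \<in> W. to_nat_on W w \<le> k}"
proof -
  have "to_nat_on W ` {w \<in> W. to_nat_on W w \<le> k} \<subseteq> {..k}" by auto
  then have "finite (to_nat_on W ` {w \<in> W. to_nat_on W w \<le> k})" using finite_subset by blast
  moreover have "inj_on (to_nat_on W) {w \<in> W. to_nat_on W w \<le> k}"
    using inj_on_to_nat_on[OF cntW] by (rule inj_on_subset) auto
  ultimately show ?thesis using finite_imageD by blast
qed

lemma not_forever: assumes "s \<in> U" "c \<in> W" "\<forall>n. fst (st s n) < c \<and> c < snd (st s n)"
  shows False
proof -
  have "sp s n \<in> {w \<in> W. to_nat_on W w \<le> to_nat_on W c}" for n
  proof -
    have "snd (st s n) \<in> I" using st_inv[OF assms(1), of n] WI by auto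
    then show ?thesis using split(1,4)[of "snd (st s n)" "fst (st s n)"] assms(2,3)
      st_inv[OF assms(1), of n] unfolding sp_def by auto
  qed
  then have "range (sp s) \<subseteq> {w \<in> W. to_nat_on W w \<le> to_nat_on W c}" by auto
  then have "finite (range (sp s))" using fin_W finite_subset by blast
  then show False using range_inj_infinite[OF sp_inj[OF assms(1)]] by simp
qed

lemma shrink_left: assumes "s \<in> U" "c \<in> W" "dle (wR c) s" shows "\<exists>n. c \<le> fst (st s n)"
proof (rule ccontr)
  assume "\<not> ?thesis"
  then have "\<forall>n. fst (st s n) < c" by (metis not_le)
  moreover have "c < snd (st s n)" for n
    using st_inv[OF assms(1), of n] assms(3) unfolding dle_iff wR_def wL_def by auto
  ultimately show False using not_forever[OF assms(1,2)] by auto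
qed

lemma shrink_right: assumes "s \<in> U" "c \<in> W" "dle s (wL c)" shows "\<exists>n. snd (st s n) \<le> c"
proof (rule ccontr)
  assume "\<not> ?thesis"
  then have "\<forall>n. c < snd (st s n)" by (metis not_le)
  moreover have "fst (st s n) < c" for n
    using st_inv[OF assms(1), of n] assms(3) unfolding dle_iff wR_def wL_def by auto
  ultimately show False using not_forever[OF assms(1,2)] by auto
qed

definition piece :: "dpt \<Rightarrow> nat \<Rightarrow> dpt set" where
  "piece s n = Bset (fst (st s n)) (snd (st s n))"

lemma piece_mem: "s \<in> U \<Longrightarrow> s \<in> piece s n"
  using st_inv[of s n] unfolding piece_def mem_Bset by auto

lemma Bset_mono: "p \<le> p' \<Longrightarrow> q' \<le> q \<Longrightarrow> Bset p' q' \<subseteq> Bset p q"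
  by (auto simp: mem_Bset dle_iff wR_def wL_def)

lemma piece_sub: "s \<in> U \<Longrightarrow> n \<le> m \<Longrightarrow> piece s m \<subseteq> piece s n"
  unfolding piece_def using st_monoN[of s n m] by (intro Bset_mono) auto

lemma piece_U: "s \<in> U \<Longrightarrow> piece s n \<subseteq> U"
  using piece_sub[of s 0 n] by (simp add: piece_def)

lemma piece_open: "s \<in> U \<Longrightarrow> openin (fractured_topology I W) (piece s n)"
  unfolding piece_def using st_inv[of s n] by (intro Bset_open) auto

lemma shrink: assumes "s \<in> U" "c \<in> W" "d \<in> W" "s \<in> Bset c d" shows "\<exists>n. piece s n \<subseteq> Bset c d"
proof -
  obtain n1 where n1: "c \<le> fst (st s n1)" using shrink_left assms unfolding mem_Bset by blast
  obtain n2 where n2: "snd (st s n2) \<le> d" using shrink_right assms unfolding mem_Bset by blast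
  have "c \<le> fst (st s (max n1 n2))" "snd (st s (max n1 n2)) \<le> d"
    using st_monoN[OF assms(1), of n1 "max n1 n2"] st_monoN[OF assms(1), of n2 "max n1 n2"] n1 n2 by auto
  then show ?thesis unfolding piece_def by (intro exI[of _ "max n1 n2"] Bset_mono)
qed

lemma st_dep: "(\<forall>k<n. addr s k = addr t k) \<Longrightarrow> st s n = st t n"
proof (induction n)
  case 0
  then show ?case by simp
next
  case (Suc n)
  then have "st s n = st t n" by auto
  then show ?case using Suc.prems unfolding st_Suc' sp_def by auto
qed

lemma addr_piece: assumes "s \<in> U" "t \<in> piece s n" shows "\<forall>k<n. addr t k = addr s k"
  using assms(2)
proof (induction n)
  case 0
  then show ?case by simp
next
  case (Suc n)
  have "t \<in> piece s n" using Suc.prems piece_sub[OF assms(1), of n "Suc n"] by auto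
  then have IH: "\<forall>k<n. addr t k = addr s k" using Suc.IH by auto
  then have e: "st t n = st s n" by (intro st_dep) auto
  have "addr t n = addr s n"
  proof (cases "addr s n")
    case True
    then have "dle (wR (sp s n)) t" using Suc.prems unfolding piece_def mem_Bset st_Suc' by auto
    then show ?thesis using True e unfolding addr_def sp_def by simp
  next
    case False
    then have "dle t (wL (sp s n))" using Suc.prems unfolding piece_def mem_Bset st_Suc' by auto
    then have "\<not> dle (wR (sp s n)) t" unfolding dle_iff wR_def wL_def by auto
    then show ?thesis using False e unfolding addr_def sp_def by simp
  qed
  then show ?case using IH less_Suc_eq by auto
qed

lemma addr_inj: assumes "s \<in> U" "t \<in> U" "addr s = addr t" shows "s = t"
proof -
  have e: "st s n = st t n" for n using assms(3) by (intro st_dep) auto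
  have False if H: "s \<in> U" "t \<in> U" "dlt s t" "\<And>n. st s n = st t n" for s t
  proof -
    have "s \<in> F" "t \<in> F" using that unfolding mem_Bset by auto
    then obtain w where w: "w \<in> W" "dle s (wL w)" "dle (wR w) t"
      using between[of s t] H(3) by blast
    obtain n where "w \<le> fst (st t n)" using shrink_left[OF H(2) w(1,3)] by auto
    moreover have "dle (wR (fst (st s n))) s" using st_inv[OF H(1)] by auto
    ultimately show False using w(2) H(4)[of n] unfolding dle_iff wR_def wL_def by auto
  qed
  moreover have "dlt s t \<or> dlt t s \<or> s = t" unfolding dlt_iff by (cases s; cases t) auto
  ultimately show ?thesis using assms e by metis
qed

end



context frac2 begin

primrec ends :: "(nat \<Rightarrow> bool) \<Rightarrow> nat \<Rightarrow> real \<times> real" where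
  "ends d 0 = (a, b)"
| "ends d (Suc n) = (if d n then (split (fst (ends d n)) (snd (ends d n)), snd (ends d n))
     else (fst (ends d n), split (fst (ends d n)) (snd (ends d n))))"

lemma ends_inv: "fst (ends d n) \<in> W \<and> snd (ends d n) \<in> W \<and> fst (ends d n) < snd (ends d n) \<and>
   a \<le> fst (ends d n) \<and> snd (ends d n) \<le> b"
proof (induction n)
  case 0
  then show ?case using aW bW ab by simp
next
  case (Suc n)
  have "snd (ends d n) \<in> I" using Suc WI by auto
  note sp = split[OF this, of "fst (ends d n)"]
  show ?case using Suc sp by auto
qed

lemma ends_monoN: "n \<le> m \<Longrightarrow> fst (ends d n) \<le> fst (ends d m) \<and> snd (ends d m) \<le> snd (ends d n)"
proof -
  assume nm: "n \<le> m"
  have 1: "fst (ends d k) \<le> fst (ends d (Suc k))" for k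
    using ends_inv[of d k] split[of "snd (ends d k)" "fst (ends d k)"] WI by auto
  have 2: "snd (ends d (Suc k)) \<le> snd (ends d k)" for k
    using ends_inv[of d k] split[of "snd (ends d k)" "fst (ends d k)"] WI by auto
  show ?thesis using lift_Suc_mono_le[of "\<lambda>n. fst (ends d n)", OF 1 nm]
      lift_Suc_antimono_le[of "\<lambda>n. snd (ends d n)", OF 2 nm] by blast
qed

lemma ends_lt: "fst (ends d n) < snd (ends d m)"
proof (cases "n \<le> m")
  case True
  then show ?thesis using ends_monoN[OF True, of d] ends_inv[of d m] by auto
next
  case False
  then have mn: "m \<le> n" by auto
  show ?thesis using ends_monoN[OF mn, of d] ends_inv[of d n] by auto
qed

lemma addr_step: assumes "st s n = ends d n" "s \<in> Bset (fst (ends d (Suc n))) (snd (ends d (Suc n)))"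
  shows "addr s n = d n"
proof (cases "d n")
  case True
  then have "dle (wR (sp s n)) s" using assms unfolding mem_Bset sp_def by auto
  then show ?thesis using True unfolding addr_def by simp
next
  case False
  then have "dle s (wL (sp s n))" using assms unfolding mem_Bset sp_def by auto
  then have "\<not> dle (wR (sp s n)) s" unfolding dle_iff wR_def wL_def by auto
  then show ?thesis using False unfolding addr_def by simp
qed

lemma addr_surj: "\<exists>s\<in>U. addr s = d"
proof -
  define \<alpha> where "\<alpha> = (SUP n. fst (ends d n))"
  have bdd: "bdd_above (range (\<lambda>n. fst (ends d n)))"
  proof -
    have "fst (ends d n) \<le> b" for n using ends_inv[of d n] by auto
    then show ?thesis by (intro bdd_aboveI[of _ b]) auto
  qed
  have up: "fst (ends d n) \<le> \<alpha>" for n unfolding \<alpha>_def by (rule cSUP_upper[OF _ bdd]) auto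
  have lo: "\<alpha> \<le> snd (ends d m)" for m unfolding \<alpha>_def
    by (rule cSUP_least) (auto intro: less_imp_le[OF ends_lt])
  have \<alpha>I: "\<alpha> \<in> I"
  proof -
    have "a \<le> \<alpha>" "\<alpha> \<le> b" using up[of 0] lo[of 0] by auto
    then show ?thesis using intv aW bW WI unfolding is_interval_1 by blast
  qed
  define s where "s = (if (\<exists>n. fst (ends d n) = \<alpha>) then (\<alpha>, 1::int)
      else if \<alpha> \<in> W then (\<alpha>, -1) else (\<alpha>, 0))"
  have inE: "s \<in> Bset (fst (ends d n)) (snd (ends d n))" for n
  proof (cases "\<exists>k. fst (ends d k) = \<alpha>")
    case True
    then obtain k where k: "fst (ends d k) = \<alpha>" by auto
    then have "\<alpha> \<in> W" using ends_inv[of d k] by auto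
    moreover have "\<alpha> < snd (ends d n)" using ends_lt[of d k n] k by auto
    ultimately show ?thesis using True up[of n] \<alpha>I
      unfolding s_def mem_Bset wR_def wL_def dle_iff by (auto simp: mem_F)
  next
    case False
    then have "fst (ends d n) < \<alpha>" using up[of n] by (metis order_le_imp_less_or_eq)
    moreover have "\<alpha> \<in> W \<or> \<alpha> < snd (ends d n)" using ends_inv[of d n] lo[of n] by fastforce
    ultimately show ?thesis using False lo[of n] \<alpha>I
      unfolding s_def mem_Bset wR_def wL_def dle_iff by (auto simp: mem_F)
  qed
  have sU: "s \<in> U" using inE[of 0] by simp
  have e: "st s n = ends d n" for n
  proof (induction n)
    case 0
    then show ?case by simp
  next
    case (Suc n)
    have "addr s n = d n" using addr_step[OF Suc inE] .
    then show ?case using Suc unfolding st_Suc' sp_def by simp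
  qed
  have "addr s n = d n" for n using addr_step[OF e inE] .
  then show ?thesis using sU by auto
qed

definition phi :: "dpt \<Rightarrow> real" where "phi s = tern (addr s)"

lemma phi_inj: "inj_on phi U"
  unfolding inj_on_def phi_def using addr_inj tern_inj by blast

lemma phi_image: "phi ` U = cantor_set"
proof
  show "phi ` U \<subseteq> cantor_set" unfolding phi_def using tern_cantor by auto
  show "cantor_set \<subseteq> phi ` U"
  proof
    fix x assume "x \<in> cantor_set"
    then have "x = tern (dig x)" by (rule cantor_tern)
    moreover obtain s where "s \<in> U" "addr s = dig x" using addr_surj by blast
    ultimately show "x \<in> phi ` U" unfolding phi_def by (intro image_eqI[of _ _ s]) auto
  qed
qed

lemma U_top: "topspace (subtopology (fractured_topology I W) U) = U"
  using Bset_open[OF aW bW ab] openin_subset by (intro topspace_subtopology_subset) blast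

lemma small_pow: "0 < \<epsilon> \<Longrightarrow> \<exists>n. 1 / (3::real) ^ n < \<epsilon>"
  using real_arch_pow_inv[of \<epsilon> "1/3"] by (simp add: power_divide)

lemma phi_cont: "continuous_map (subtopology (fractured_topology I W) U) (top_of_set cantor_set) phi"
  unfolding continuous_map_in_subtopology
proof
  show "phi \<in> topspace (subtopology (fractured_topology I W) U) \<rightarrow> cantor_set"
    using phi_image U_top by auto
  show "continuous_map (subtopology (fractured_topology I W) U) euclideanreal phi"
    unfolding continuous_map_def U_top
  proof safe
    fix V :: "real set" assume "openin euclideanreal V"
    then have oV: "open V" by simp
    show "openin (subtopology (fractured_topology I W) U) {x \<in> U. phi x \<in> V}"
    proof (subst openin_subopen, safe)
      fix s assume s: "s \<in> U" "phi s \<in> V"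
      obtain \<epsilon> where \<epsilon>: "\<epsilon> > 0" "ball (phi s) \<epsilon> \<subseteq> V" using oV s(2) open_contains_ball by blast
      obtain n where n: "1 / (3::real) ^ n < \<epsilon>" using small_pow[OF \<epsilon>(1)] by blast
      have "openin (subtopology (fractured_topology I W) U) (piece s n)"
        unfolding openin_subtopology using piece_open[OF s(1)] piece_U[OF s(1)]
        by (intro exI[of _ "piece s n"]) auto
      moreover have "piece s n \<subseteq> {x \<in> U. phi x \<in> V}"
      proof
        fix t assume t: "t \<in> piece s n"
        have "\<bar>phi t - phi s\<bar> \<le> 1/3^n" unfolding phi_def
          using addr_piece[OF s(1) t] by (intro tern_close) auto
        then have "phi t \<in> ball (phi s) \<epsilon>" using n by (simp add: dist_real_def abs_minus_commute)
        then show "t \<in> {x \<in> U. phi x \<in> V}" using \<epsilon> t piece_U[OF s(1)] by auto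
      qed
      ultimately show "\<exists>T. openin (subtopology (fractured_topology I W) U) T \<and> s \<in> T \<and> T \<subseteq> {x \<in> U. phi x \<in> V}"
        using piece_mem[OF s(1)] by blast
    qed
  qed auto
qed

definition h :: "real \<Rightarrow> dpt" where "h = inv_into U phi"

lemma h_props: "x \<in> cantor_set \<Longrightarrow> h x \<in> U \<and> phi (h x) = x"
  unfolding h_def using phi_image by (auto intro: inv_into_into f_inv_into_f)

lemma h_phi: "s \<in> U \<Longrightarrow> h (phi s) = s"
  unfolding h_def using phi_inj by (rule inv_into_f_f)

lemma h_cont: "continuous_map (top_of_set cantor_set) (subtopology (fractured_topology I W) U) h"
  unfolding continuous_map_in_subtopology
proof
  show "h \<in> topspace (top_of_set cantor_set) \<rightarrow> U" using h_props by auto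
  show "continuous_map (top_of_set cantor_set) (fractured_topology I W) h"
    unfolding continuous_map_def
  proof safe
    fix x assume "x \<in> topspace (top_of_set cantor_set)"
    then have "h x \<in> U" using h_props by auto
    then show "h x \<in> topspace (fractured_topology I W)"
      using Bset_open[OF aW bW ab] openin_subset by blast
  next
    fix V assume oV: "openin (fractured_topology I W) V"
    then obtain V' where V': "openin (divided_topology I W) V'" "V = V' \<inter> F"
      unfolding fractured_topology_def openin_subtopology by blast
    have g: "\<forall>s\<in>F \<inter> V'. \<exists>p q. p \<in> W \<and> q \<in> W \<and> p < q \<and> s \<in> Bset p q \<and> Bset p q \<subseteq> V'"
      using V'(1) unfolding divided_topology_def openin_topology_generated_by_iff by (rule gen_case)
    show "openin (top_of_set cantor_set) {x \<in> topspace (top_of_set cantor_set). h x \<in> V}"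
      unfolding openin_euclidean_subtopology_iff
    proof safe
      fix x assume x: "x \<in> topspace (top_of_set cantor_set)" "h x \<in> V"
      then have xc: "x \<in> cantor_set" by simp
      let ?s = "h x"
      have sU: "?s \<in> U" and px: "phi ?s = x" using h_props[OF xc] by auto
      obtain p q where pq: "p \<in> W" "q \<in> W" "?s \<in> Bset p q" "Bset p q \<subseteq> V'"
        using g x(2) V'(2) by blast
      obtain n where n: "piece ?s n \<subseteq> Bset p q" using shrink[OF sU pq(1,2,3)] by blast
      show "\<exists>e>0. \<forall>x'\<in>cantor_set. dist x' x < e \<longrightarrow> x' \<in> {x \<in> topspace (top_of_set cantor_set). h x \<in> V}"
      proof (intro exI[of _ "1/3^n"] conjI ballI impI)
        fix y assume y: "y \<in> cantor_set" "dist y x < 1/3^n"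
        let ?t = "h y"
        have tU: "?t \<in> U" and py: "phi ?t = y" using h_props[OF y(1)] by auto
        have "\<forall>k<n. addr ?t k = addr ?s k"
          using y(2) px py unfolding phi_def dist_real_def by (intro tern_far) auto
        then have "st ?t n = st ?s n" by (intro st_dep) auto
        then have "?t \<in> piece ?s n" using piece_mem[OF tU, of n] unfolding piece_def by simp
        then have "?t \<in> V" using n pq(4) V'(2) unfolding Bset_def by auto
        then show "y \<in> {x \<in> topspace (top_of_set cantor_set). h x \<in> V}" using y by simp
      qed simp
    qed auto
  qed
qed

lemma homeo: "subtopology (fractured_topology I W) U homeomorphic_space top_of_set cantor_set"
  unfolding homeomorphic_space_def homeomorphic_maps_def
  using phi_cont h_cont h_phi h_props U_top by (intro exI[of _ phi] exI[of _ h]) auto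

end


theorem proposition3p8:
  fixes I W :: "real set"
  assumes "is_interval I" and "open I" and "I \<noteq> {}"
    and "countable W" and "W \<subseteq> I" and "I \<subseteq> closure W"
  defines "\<B> \<equiv> {closed_iv (wR a) (wL b) \<inter> fractured_interval I W | a b. a \<in> W \<and> b \<in> W \<and> a < b}"
  shows "openin (fractured_topology I W) = arbitrary union_of (\<lambda>U. U \<in> \<B>) \<and>
         (\<forall>U\<in>\<B>. subtopology (fractured_topology I W) U homeomorphic_space
                 subtopology euclideanreal cantor_set)"
proof -
  interpret frac I W using assms by unfold_locales auto
  have B: "\<B> = BB" unfolding \<B>_def BB_def Bset_def by auto
  show ?thesis
  proof
    show "openin (fractured_topology I W) = arbitrary union_of (\<lambda>U. U \<in> \<B>)"
      using part1 B by simp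
    show "\<forall>X\<in>\<B>. subtopology (fractured_topology I W) X homeomorphic_space
                 subtopology euclideanreal cantor_set"
    proof
      fix X assume "X \<in> \<B>"
      then obtain p q where pq: "p \<in> W" "q \<in> W" "p < q" "X = Bset p q" unfolding B BB_def by auto
      interpret frac2 I W p q by unfold_locales (use pq in auto)
      show "subtopology (fractured_topology I W) X homeomorphic_space
                 subtopology euclideanreal cantor_set" using homeo pq(4) by simp
    qed
  qed
qed

end
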